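(* Let $\Omega\subseteq\mathbb{C}$ be a domain, let $\omega\in H(\Omega)$ and let $\varphi:\Omega\to\Omega$ be holomorphic. Then the weighted composition operator $C_{\omega,\varphi}:H(\Omega)\to H(\Omega)$, $f\mapsto\omega\cdot(f\circ\varphi)$, does not support a supercyclic algebra.
   Context: $H(\Omega)$ is the Fréchet algebra of holomorphic functions on $\Omega$ with the compact-open topology. A vector $f$ is supercyclic for an operator $T$ if $\{\lambda T^nf:\lambda\in\mathbb{C},n\ge0\}$ is dense. $T$ supports a supercyclic algebra if there is a subalgebra $A\ne\{0\}$ of $H(\Omega)$ all of whose nonzero elements are supercyclic for $T$. *)

theory Defs
  imports "HOL-Analysis.Analysis"
begin

text \<open>Elements of H(Omega) are represented by functions complex => complex that are
holomorphic on Omega; only their values on Omega matter.\<close>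

definition wcomp :: "(complex \<Rightarrow> complex) \<Rightarrow> (complex \<Rightarrow> complex) \<Rightarrow>
    (complex \<Rightarrow> complex) \<Rightarrow> (complex \<Rightarrow> complex)" where
  "wcomp \<omega> \<phi> f = (\<lambda>z. \<omega> z * f (\<phi> z))"

definition dense_H :: "complex set \<Rightarrow> (complex \<Rightarrow> complex) set \<Rightarrow> bool" where
  "dense_H \<Omega> S \<longleftrightarrow>
     (\<forall>g K e. g holomorphic_on \<Omega> \<longrightarrow> compact K \<longrightarrow> K \<subseteq> \<Omega> \<longrightarrow> e > 0 \<longrightarrow>
        (\<exists>h\<in>S. \<forall>z\<in>K. cmod (h z - g z) < e))"

definition supercyclic :: "complex set \<Rightarrow> ((complex \<Rightarrow> complex) \<Rightarrow> (complex \<Rightarrow> complex))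
    \<Rightarrow> (complex \<Rightarrow> complex) \<Rightarrow> bool" where
  "supercyclic \<Omega> T f \<longleftrightarrow>
     dense_H \<Omega> {(\<lambda>z. c * (T ^^ n) f z) | c n. True}"

definition subalgebra_H :: "complex set \<Rightarrow> (complex \<Rightarrow> complex) set \<Rightarrow> bool" where
  "subalgebra_H \<Omega> A \<longleftrightarrow>
     (\<forall>f\<in>A. f holomorphic_on \<Omega>) \<and> (\<lambda>z. 0) \<in> A \<and>
     (\<forall>f\<in>A. \<forall>g\<in>A. (\<lambda>z. f z + g z) \<in> A) \<and>
     (\<forall>f\<in>A. \<forall>c. (\<lambda>z. c * f z) \<in> A) \<and>
     (\<forall>f\<in>A. \<forall>g\<in>A. (\<lambda>z. f z * g z) \<in> A)"

definition supports_supercyclic_algebra :: "complex set \<Rightarrow>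
    ((complex \<Rightarrow> complex) \<Rightarrow> (complex \<Rightarrow> complex)) \<Rightarrow> bool" where
  "supports_supercyclic_algebra \<Omega> T \<longleftrightarrow>
     (\<exists>A. subalgebra_H \<Omega> A \<and> (\<exists>f\<in>A. \<exists>z\<in>\<Omega>. f z \<noteq> 0) \<and>
          (\<forall>f\<in>A. (\<exists>z\<in>\<Omega>. f z \<noteq> 0) \<longrightarrow> supercyclic \<Omega> T f))"

end

theory Submission
  imports Defs
begin


lemma key:
  fixes q :: "complex \<Rightarrow> complex" and a :: complex and r :: real
  assumes r: "r > 0" and cq: "continuous_on (sphere a r) q"
    and cl: "\<forall>z\<in>sphere a r. cmod (q z ^ 2 - (z - a)) < r"
  shows False
proof -
  define \<gamma> where "\<gamma> t = a + of_real r * exp (\<i> * of_real t)" for t :: real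
  have \<gamma>s: "\<gamma> t \<in> sphere a r" for t
    using r by (simp add: \<gamma>_def dist_norm norm_mult)
  have \<gamma>a: "\<gamma> t - a = of_real r * exp (\<i> * of_real t)" for t
    by (simp add: \<gamma>_def)
  define Q where "Q t = q (\<gamma> t) / (of_real (sqrt r) * exp (\<i> * of_real t / 2))" for t
  have Q2: "Q t ^ 2 = q (\<gamma> t) ^ 2 / (\<gamma> t - a)" for t
  proof -
    have "(of_real (sqrt r) * exp (\<i> * of_real t / 2)) ^ 2 = (of_real r * exp (\<i> * of_real t) :: complex)"
      using r by (simp add: power_mult_distrib flip: exp_of_nat_mult of_real_power)
    then show ?thesis by (simp add: Q_def \<gamma>a power_divide)
  qed
  have reQ2: "Re (Q t ^ 2) > 0" for t
  proof -
    have nz: "\<gamma> t - a \<noteq> 0" using r by (simp add: \<gamma>a)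
    have nr: "cmod (\<gamma> t - a) = r" using \<gamma>s[of t] by (simp add: dist_norm norm_minus_commute)
    have "cmod (Q t ^ 2 - 1) = cmod (q (\<gamma> t) ^ 2 - (\<gamma> t - a)) / cmod (\<gamma> t - a)"
      using nz by (simp add: Q2 flip: norm_divide) (simp add: field_simps)
    also have "\<dots> < 1" using cl \<gamma>s[of t] nr r by simp
    finally have "cmod (Q t ^ 2 - 1) < 1" .
    moreover have "\<bar>Re (Q t ^ 2 - 1)\<bar> \<le> cmod (Q t ^ 2 - 1)" by (rule abs_Re_le_cmod)
    ultimately show ?thesis by simp
  qed
  have reQ: "Re (Q t) \<noteq> 0" for t
  proof
    assume "Re (Q t) = 0"
    then have "Re (Q t ^ 2) = - ((Im (Q t)) ^ 2)" by (simp add: power2_eq_square)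
    with reQ2[of t] show False by (smt (verit) zero_le_power2)
  qed
  have Q2pi: "Q (2*pi) = - Q 0"
  proof -
    have "\<gamma> (2*pi) = \<gamma> 0" using exp_two_pi_i by (simp add: \<gamma>_def mult.commute)
    moreover have "exp (\<i> * of_real (2*pi) / 2) = -1"
      by (simp add: Euler)
    ultimately show ?thesis by (simp add: Q_def)
  qed
  have cg: "continuous_on {0..2*pi} \<gamma>"
    unfolding \<gamma>_def by (intro continuous_intros)
  have cqg: "continuous_on {0..2*pi} (q \<circ> \<gamma>)"
    by (rule continuous_on_compose[OF cg]) (rule continuous_on_subset[OF cq], use \<gamma>s in auto)
  have cQ: "continuous_on {0..2*pi} (\<lambda>t. Re (Q t))"
    unfolding Q_def using cqg
    using r by (intro continuous_intros) (auto simp: o_def)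
  have "\<exists>t. 0 \<le> t \<and> t \<le> 2*pi \<and> Re (Q t) = 0"
  proof (cases "Re (Q 0) < 0")
    case True
    then show ?thesis using IVT'[of "\<lambda>t. Re (Q t)" 0 0 "2*pi"] cQ Q2pi by auto
  next
    case False
    with reQ[of 0] have "Re (Q 0) > 0" by simp
    then show ?thesis using IVT2'[of "\<lambda>t. Re (Q t)" "2*pi" 0 0] cQ Q2pi by auto
  qed
  with reQ show False by blast
qed


lemma sq_contra:
  fixes q h :: "complex \<Rightarrow> complex" and a :: complex and r :: real
  assumes r: "r > 0" and cq: "continuous_on (sphere a r) q"
    and hq: "\<forall>z\<in>sphere a r. h z = q z ^ 2"
    and cl: "\<forall>z\<in>sphere a r. cmod (h z - (z - a)) < r"
  shows False
  using key[OF r cq] hq cl by auto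

theorem theorem22:
  fixes \<Omega> :: "complex set" and \<omega> \<phi> :: "complex \<Rightarrow> complex"
  assumes "open \<Omega>" and "connected \<Omega>" and "\<Omega> \<noteq> {}"
    and "\<omega> holomorphic_on \<Omega>"
    and "\<phi> holomorphic_on \<Omega>" and "\<phi> ` \<Omega> \<subseteq> \<Omega>"
  shows "\<not> supports_supercyclic_algebra \<Omega> (wcomp \<omega> \<phi>)"
proof
  assume "supports_supercyclic_algebra \<Omega> (wcomp \<omega> \<phi>)"
  then obtain A f z0 where sub: "subalgebra_H \<Omega> A" and fA: "f \<in> A" and z0: "z0 \<in> \<Omega>" "f z0 \<noteq> 0"
    and all: "\<forall>g\<in>A. (\<exists>z\<in>\<Omega>. g z \<noteq> 0) \<longrightarrow> supercyclic \<Omega> (wcomp \<omega> \<phi>) g"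
    unfolding supports_supercyclic_algebra_def by blast
  define T where "T = wcomp \<omega> \<phi>"
  define u where "u = (\<lambda>z. f z * f z)"
  have uA: "u \<in> A" using sub fA by (simp add: subalgebra_H_def u_def)
  have fh: "f holomorphic_on \<Omega>" using sub fA by (simp add: subalgebra_H_def)
  have fc: "continuous_on \<Omega> f" using fh holomorphic_on_imp_continuous_on by blast
  have "supercyclic \<Omega> T u" using all uA z0 unfolding T_def u_def by auto
  then have hd: "\<And>g K e. g holomorphic_on \<Omega> \<Longrightarrow> compact K \<Longrightarrow> K \<subseteq> \<Omega> \<Longrightarrow> e > 0 \<Longrightarrow>
      \<exists>c n. \<forall>z\<in>K. cmod (c * (T^^n) u z - g z) < e"
    unfolding supercyclic_def dense_H_def by fastforce
  have Tsuc: "(T^^Suc n) v z = \<omega> z * (T^^n) v (\<phi> z)" for n v z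
    by (simp add: T_def wcomp_def)
  have gh: "(\<lambda>z. z - a) holomorphic_on \<Omega>" for a :: complex
    by (intro holomorphic_intros)
  show False
  proof (cases "\<exists>z1\<in>\<Omega>. \<omega> z1 = 0")
    case True
    then obtain z1 where z1: "z1 \<in> \<Omega>" "\<omega> z1 = 0" by blast
    obtain \<delta> where \<delta>: "\<delta> > 0" "ball z1 \<delta> \<subseteq> \<Omega>" using assms(1) z1(1) openE by blast
    define a where "a = z1 + of_real (\<delta>/2)"
    define r where "r = \<delta>/8"
    have r: "r > 0" using \<delta> by (simp add: r_def)
    have da: "dist z1 a = \<delta>/2" using \<delta> by (simp add: a_def dist_norm)
    have cb: "cball a r \<subseteq> \<Omega>"
    proof
      fix z assume "z \<in> cball a r"
      then have "dist a z \<le> r" by simp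
      then have "dist z1 z < \<delta>" using dist_triangle[of z1 z a] da \<delta> by (simp add: r_def)
      then show "z \<in> \<Omega>" using \<delta> by auto
    qed
    define K where "K = sphere a r \<union> {z1}"
    have Kc: "compact K" unfolding K_def by (intro compact_Un compact_sphere) auto
    have KO: "K \<subseteq> \<Omega>" unfolding K_def using cb z1 sphere_cball by blast
    obtain c n where app: "\<forall>z\<in>K. cmod (c * (T^^n) u z - (z - a)) < r"
      using hd[OF gh Kc KO r] by blast
    show False
    proof (cases n)
      case 0
      show False
      proof (rule sq_contra[OF r, where q="\<lambda>z. csqrt c * f z" and h="\<lambda>z. c * (T^^n) u z"])
        show "continuous_on (sphere a r) (\<lambda>z. csqrt c * f z)"
          using cb sphere_cball by (intro continuous_intros continuous_on_subset[OF fc]) blast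
        show "\<forall>z\<in>sphere a r. c * (T ^^ n) u z = (csqrt c * f z)\<^sup>2"
          using 0 by (simp add: u_def power_mult_distrib power2_eq_square[of "f _"])
        show "\<forall>z\<in>sphere a r. cmod (c * (T ^^ n) u z - (z - a)) < r"
          using app K_def by auto
      qed
    next
      case (Suc m)
      have "cmod (c * (T^^n) u z1 - (z1 - a)) < r" using app K_def by auto
      moreover have "cmod (z1 - a) = \<delta>/2" using da by (simp add: dist_norm)
      ultimately show False using Suc z1 \<delta> by (simp add: T_def wcomp_def r_def norm_minus_commute)
    qed
  next
    case False
    have ind: "\<exists>W F. W holomorphic_on \<Omega> \<and> (\<forall>z\<in>\<Omega>. W z \<noteq> 0) \<and> continuous_on \<Omega> F \<and>
        (\<forall>z\<in>\<Omega>. (T^^n) u z = W z * (F z) ^ 2)" for n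
    proof (induction n)
      case 0
      show ?case
        by (rule exI[of _ "\<lambda>z. 1"], rule exI[of _ f]) (auto simp: fc u_def power2_eq_square)
    next
      case (Suc n)
      then obtain W F where W: "W holomorphic_on \<Omega>" "\<forall>z\<in>\<Omega>. W z \<noteq> 0" "continuous_on \<Omega> F"
        "\<forall>z\<in>\<Omega>. (T^^n) u z = W z * (F z) ^ 2" by blast
      have h1: "(W \<circ> \<phi>) holomorphic_on \<Omega>"
        by (rule holomorphic_on_compose_gen[OF assms(5) W(1) assms(6)])
      have h2: "(\<lambda>z. \<omega> z * (W \<circ> \<phi>) z) holomorphic_on \<Omega>"
        by (intro holomorphic_intros assms(4) h1)
      have c2: "continuous_on \<Omega> (F \<circ> \<phi>)"
        by (rule continuous_on_compose[OF holomorphic_on_imp_continuous_on[OF assms(5)]])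
           (rule continuous_on_subset[OF W(3) assms(6)])
      show ?case
      proof (intro exI conjI)
        show "(\<lambda>z. \<omega> z * (W \<circ> \<phi>) z) holomorphic_on \<Omega>" by (rule h2)
        show "\<forall>z\<in>\<Omega>. \<omega> z * (W \<circ> \<phi>) z \<noteq> 0" using False W(2) assms(6) by auto
        show "continuous_on \<Omega> (F \<circ> \<phi>)" by (rule c2)
        show "\<forall>z\<in>\<Omega>. (T ^^ Suc n) u z = \<omega> z * (W \<circ> \<phi>) z * ((F \<circ> \<phi>) z)\<^sup>2"
        proof
          fix z assume z: "z \<in> \<Omega>"
          then have pz: "\<phi> z \<in> \<Omega>" using assms(6) by blast
          have "(T ^^ Suc n) u z = \<omega> z * (T^^n) u (\<phi> z)" by (rule Tsuc)
          also have "\<dots> = \<omega> z * (W (\<phi> z) * (F (\<phi> z))^2)" using W(4) pz by simp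
          finally show "(T ^^ Suc n) u z = \<omega> z * (W \<circ> \<phi>) z * ((F \<circ> \<phi>) z)\<^sup>2"
            by (simp add: mult.assoc)
        qed
      qed
    qed
    obtain a where aO: "a \<in> \<Omega>" using assms(3) by blast
    obtain \<delta> where \<delta>: "\<delta> > 0" "ball a \<delta> \<subseteq> \<Omega>" using assms(1) aO openE by blast
    define r where "r = \<delta>/2"
    have r: "r > 0" using \<delta> by (simp add: r_def)
    have cb: "cball a r \<subseteq> \<Omega>" proof
      fix z assume "z \<in> cball a r"
      then have "dist a z < \<delta>" using \<delta> by (simp add: r_def)
      then show "z \<in> \<Omega>" using \<delta> by auto
    qed
    have Kc: "compact (sphere a r)" by simp
    have KO: "sphere a r \<subseteq> \<Omega>" using cb sphere_cball by blast
    obtain c n where app: "\<forall>z\<in>sphere a r. cmod (c * (T^^n) u z - (z - a)) < r"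
      using hd[OF gh Kc KO r] by blast
    obtain W F where W: "W holomorphic_on \<Omega>" "\<forall>z\<in>\<Omega>. W z \<noteq> 0" "continuous_on \<Omega> F"
        "\<forall>z\<in>\<Omega>. (T^^n) u z = W z * (F z) ^ 2" using ind by blast
    have Wc: "continuous_on (cball a r) W"
      using cb holomorphic_on_imp_continuous_on[OF W(1)] continuous_on_subset by blast
    obtain S where S: "continuous_on (cball a r) S" "\<And>x. x \<in> cball a r \<Longrightarrow> W x = (S x) ^ 2"
      using continuous_sqrt_on_contractible[OF Wc convex_imp_contractible[OF convex_cball]] W(2) cb
      by blast
    show False
    proof (rule sq_contra[OF r, where q="\<lambda>z. csqrt c * S z * F z" and h="\<lambda>z. c * (T^^n) u z"])
      show "continuous_on (sphere a r) (\<lambda>z. csqrt c * S z * F z)"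
        using cb sphere_cball
        by (intro continuous_intros continuous_on_subset[OF W(3) KO] continuous_on_subset[OF S(1) sphere_cball])
      show "\<forall>z\<in>sphere a r. c * (T ^^ n) u z = (csqrt c * S z * F z)\<^sup>2"
      proof
        fix z assume z: "z \<in> sphere a r"
        then have "z \<in> \<Omega>" "z \<in> cball a r" using KO sphere_cball by blast+
        then have "(T ^^ n) u z = (S z)^2 * (F z)^2" using W(4) S(2) by simp
        then show "c * (T ^^ n) u z = (csqrt c * S z * F z)\<^sup>2" by (simp add: power_mult_distrib)
      qed
      show "\<forall>z\<in>sphere a r. cmod (c * (T ^^ n) u z - (z - a)) < r"
        using app by auto
    qed
  qed
qed

end
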